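(* Let $(X,\mu)$ and $(Y,\nu)$ be $\sigma$-finite measure spaces and let $\tau:Y\to X$ be a measurable nonsingular map (i.e. $\nu(\tau^{-1}(E))=0$ for every $\mu$-null set $E$). Let $0<p,q<\infty$ and let $\Phi:[0,\infty)\to[0,\infty)$ be such that $t\mapsto\Phi(t^{1/q})$ is a Young function. Then the composition operator $C_\tau f=f\circ\tau$ is bounded from $L^{p,q}(X,\mu)$ to $L^\Phi(Y,\nu)$ if and only if there exists a constant $D\ge1$ such that for all $\mu$-measurable sets $E\subset X$, \[ \nu(\tau^{-1}(E))\le\left\{\Phi\left(\frac{1}{D\mu(E)^{1/p}}\right)\right\}^{-1}. \]
   Context: A Young function is a map $\Psi:[0,\infty)\to[0,\infty)$ that is positive on $(0,\infty)$, convex, and satisfies $\lim_{t\downarrow0}\Psi(t)=\Psi(0)=0$. The Orlicz space $L^\Phi(Y,\nu)$ (for $\Phi$ with $\Phi((\cdot)^{1/q})$ a Young function) consists of measurable $g$ on $Y$ with $\int_Y\Phi(\epsilon|g|)\,d\nu<\infty$ for every $\epsilon>0$, with quasi-norm $\|g\|_{L^\Phi(Y)}=\inf\{\lambda>0:\int_Y\Phi(|g(y)|/\lambda)\,d\nu(y)\le1\}$. The Lorentz space $L^{p,q}(X,\mu)$ consists of measurable $f$ with $\|f\|_{L^{p,q}(X)}=\left(\int_0^\infty\left[t\,\mu(\{x:|f(x)|>t\})^{1/p}\right]^q\frac{dt}{t}\right)^{1/q}<\infty$. Boundedness means $\|C_\tau f\|_{L^\Phi(Y)}\le C\|f\|_{L^{p,q}(X)}$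 for some $C$ and all $f$. Conventions $1/0=\infty$, $\Phi(\infty)=\infty$, $1/\infty=0$ are used when $\mu(E)\in\{0,\infty\}$. *)

theory Defs
  imports "HOL-Analysis.Analysis"
begin

definition young_function :: "(real \<Rightarrow> real) \<Rightarrow> bool" where
  "young_function \<Psi> \<longleftrightarrow>
     (\<forall>t\<ge>0. 0 \<le> \<Psi> t) \<and> (\<forall>t>0. 0 < \<Psi> t) \<and> convex_on {0..} \<Psi> \<and>
     \<Psi> 0 = 0 \<and> (\<Psi> \<longlongrightarrow> 0) (at_right 0)"

definition distrib_fun :: "'a measure \<Rightarrow> ('a \<Rightarrow> real) \<Rightarrow> real \<Rightarrow> ennreal" where
  "distrib_fun M f t = emeasure M {x \<in> space M. \<bar>f x\<bar> > t}"

definition lorentz_integral :: "'a measure \<Rightarrow> real \<Rightarrow> real \<Rightarrow> ('a \<Rightarrow> real) \<Rightarrow> ennreal" where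
  "lorentz_integral M p q f =
     (\<integral>\<^sup>+ t. indicator {0<..} t *
        (if distrib_fun M f t = \<infinity> then \<infinity>
         else ennreal ((t * enn2real (distrib_fun M f t) powr (1/p)) powr q / t)) \<partial>lborel)"

definition in_lorentz :: "'a measure \<Rightarrow> real \<Rightarrow> real \<Rightarrow> ('a \<Rightarrow> real) \<Rightarrow> bool" where
  "in_lorentz M p q f \<longleftrightarrow> f \<in> borel_measurable M \<and> lorentz_integral M p q f < \<infinity>"

definition lorentz_norm :: "'a measure \<Rightarrow> real \<Rightarrow> real \<Rightarrow> ('a \<Rightarrow> real) \<Rightarrow> real" where
  "lorentz_norm M p q f = enn2real (lorentz_integral M p q f) powr (1/q)"

definition in_orlicz :: "'b measure \<Rightarrow> (real \<Rightarrow> real) \<Rightarrow> ('b \<Rightarrow> real) \<Rightarrow> bool" where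
  "in_orlicz N \<Phi> g \<longleftrightarrow> g \<in> borel_measurable N \<and>
     (\<forall>\<epsilon>>0. (\<integral>\<^sup>+ y. ennreal (\<Phi> (\<epsilon> * \<bar>g y\<bar>)) \<partial>N) < \<infinity>)"

definition orlicz_norm :: "'b measure \<Rightarrow> (real \<Rightarrow> real) \<Rightarrow> ('b \<Rightarrow> real) \<Rightarrow> real" where
  "orlicz_norm N \<Phi> g =
     Inf {c::real. c > 0 \<and> (\<integral>\<^sup>+ y. ennreal (\<Phi> (\<bar>g y\<bar> / c)) \<partial>N) \<le> 1}"

definition nonsingular :: "'b measure \<Rightarrow> 'a measure \<Rightarrow> ('b \<Rightarrow> 'a) \<Rightarrow> bool" where
  "nonsingular N M \<tau> \<longleftrightarrow>
     (\<forall>E\<in>sets M. emeasure M E = 0 \<longrightarrow> emeasure N (\<tau> -` E \<inter> space N) = 0)"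

text \<open>Bound {Phi(1/(D mu(E)^(1/p)))}^(-1) with conventions 1/0 = oo, Phi(oo) = oo, 1/oo = 0.\<close>
definition carleson_bound :: "(real \<Rightarrow> real) \<Rightarrow> real \<Rightarrow> real \<Rightarrow> ennreal \<Rightarrow> ennreal" where
  "carleson_bound \<Phi> p D m =
     (if m = 0 then 0
      else if m = \<infinity> then \<infinity>
      else inverse (ennreal (\<Phi> (1 / (D * enn2real m powr (1/p))))))"

end

theory Submission
  imports Defs
begin

lemma phi_facts:
  fixes \<Phi> :: "real \<Rightarrow> real" and q :: real
  assumes Y: "young_function (\<lambda>t. \<Phi> (t powr (1/q)))" and q: "0 < q"
  shows phi0: "\<Phi> 0 = 0"
    and phi_nonneg: "\<And>x. 0 \<le> x \<Longrightarrow> 0 \<le> \<Phi> x"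
    and phi_pos: "\<And>x. 0 < x \<Longrightarrow> 0 < \<Phi> x"
    and phi_scale: "\<And>x y. 0 \<le> x \<Longrightarrow> x \<le> y \<Longrightarrow> 0 < y \<Longrightarrow> \<Phi> x \<le> (x/y) powr q * \<Phi> y"
    and phi_mono: "\<And>x y. 0 \<le> x \<Longrightarrow> x \<le> y \<Longrightarrow> \<Phi> x \<le> \<Phi> y"
proof -
  define \<Psi> where "\<Psi> = (\<lambda>t. \<Phi> (t powr (1/q)))"
  have Y': "young_function \<Psi>" using Y by (simp add: \<Psi>_def)
  have rep: "\<Phi> x = \<Psi> (x powr q)" if "0 \<le> x" for x
  proof -
    have "(x powr q) powr (1/q) = x" using that q by (simp add: powr_powr)
    then show ?thesis by (simp add: \<Psi>_def)
  qed
  have P0: "\<Psi> 0 = 0" and Pnn: "\<And>t. 0 \<le> t \<Longrightarrow> 0 \<le> \<Psi> t" and Ppos: "\<And>t. 0 < t \<Longrightarrow> 0 < \<Psi> t"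
    and cv: "convex_on {0..} \<Psi>" using Y' unfolding young_function_def by auto
  have Pscale: "\<Psi> (l * v) \<le> l * \<Psi> v" if "0 \<le> l" "l \<le> 1" "0 \<le> v" for l v
    using convex_onD[OF cv, of l 0 v] that P0 by simp
  show "\<Phi> 0 = 0" using rep[of 0] P0 q by simp
  show "0 \<le> \<Phi> x" if "0 \<le> x" for x using rep[OF that] Pnn[of "x powr q"] by simp
  show "0 < \<Phi> x" if "0 < x" for x using rep[of x] Ppos[of "x powr q"] that by simp
  show sc: "\<Phi> x \<le> (x/y) powr q * \<Phi> y" if "0 \<le> x" "x \<le> y" "0 < y" for x y
  proof -
    have l1: "(x/y) powr q \<le> 1" using that q by (simp add: powr_le1)
    have "\<Phi> x = \<Psi> ((x/y) powr q * y powr q)" using rep[OF that(1)] that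
      by (simp add: powr_divide)
    also have "\<dots> \<le> (x/y) powr q * \<Psi> (y powr q)" by (rule Pscale) (use l1 in auto)
    also have "\<dots> = (x/y) powr q * \<Phi> y" using rep[of y] that by simp
    finally show ?thesis .
  qed
  show "\<Phi> x \<le> \<Phi> y" if "0 \<le> x" "x \<le> y" for x y
  proof (cases "y = 0")
    case True then show ?thesis using that by simp
  next
    case False
    then have y: "0 < y" using that by simp
    have l1: "(x/y) powr q \<le> 1" using that q y by (simp add: powr_le1)
    have "0 \<le> \<Phi> y" using rep[of y] Pnn[of "y powr q"] y by simp
    then have "(x/y) powr q * \<Phi> y \<le> \<Phi> y" using l1 by (simp add: mult_left_le_one_le)
    then show ?thesis using sc[OF that y] by simp
  qed
qed

definition lint :: "'a measure \<Rightarrow> real \<Rightarrow> real \<Rightarrow> ('a \<Rightarrow> real) \<Rightarrow> real \<Rightarrow> ennreal" where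
  "lint M p q f t = indicator {0<..} t *
        (if distrib_fun M f t = \<infinity> then \<infinity>
         else ennreal ((t * enn2real (distrib_fun M f t) powr (1/p)) powr q / t))"

lemma lorentz_integral_lint: "lorentz_integral M p q f = (\<integral>\<^sup>+ t. lint M p q f t \<partial>lborel)"
  unfolding lorentz_integral_def lint_def ..

lemma dist_set: fixes f :: "'a \<Rightarrow> real" assumes [measurable]: "f \<in> borel_measurable M"
  shows "{x \<in> space M. t < \<bar>f x\<bar>} \<in> sets M"
proof -
  have "Measurable.pred M (\<lambda>x. t < \<bar>f x\<bar>)" by measurable
  then show ?thesis by (simp add: pred_def)
qed

lemma dist_mono: assumes "f \<in> borel_measurable M" "s \<le> t"
  shows "distrib_fun M f t \<le> distrib_fun M f s"
  unfolding distrib_fun_def using assms by (intro emeasure_mono) auto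

lemma dist_measurable:
  assumes "sigma_finite_measure M" "f \<in> borel_measurable M"
  shows "(\<lambda>t. distrib_fun M f t) \<in> borel_measurable lborel"
proof -
  interpret sigma_finite_measure M by fact
  let ?Q = "{z \<in> space (lborel \<Otimes>\<^sub>M M). fst z < \<bar>f (snd z)\<bar>}"
  have Q: "?Q \<in> sets (lborel \<Otimes>\<^sub>M M)" using assms(2) by measurable
  have "(\<lambda>t. emeasure M (Pair t -` ?Q)) \<in> borel_measurable lborel"
    by (rule measurable_emeasure_Pair[OF Q])
  moreover have "Pair t -` ?Q = {x \<in> space M. t < \<bar>f x\<bar>}" for t
    by (auto simp: space_pair_measure)
  ultimately show ?thesis unfolding distrib_fun_def by simp
qed

lemma lint_measurable:
  assumes "sigma_finite_measure M" "f \<in> borel_measurable M"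
  shows "lint M p q f \<in> borel_measurable lborel"
proof -
  note [measurable] = dist_measurable[OF assms]
  show ?thesis unfolding lint_def by measurable
qed

lemma lint_lower:
  assumes f: "f \<in> borel_measurable M" and p: "0 < p" and q: "0 < q" and b: "0 < b"
    and fin: "distrib_fun M f b < \<infinity>"
  shows "ennreal (2 powr (-q-1) * (b powr q * enn2real (distrib_fun M f b) powr (q/p)))
     \<le> (\<integral>\<^sup>+ t. indicator {b/2<..<b} t * lint M p q f t \<partial>lborel)"
proof -
  define dr where "dr = enn2real (distrib_fun M f b)"
  have dr0: "0 \<le> dr" by (simp add: dr_def)
  define k where "k = (b/2) powr q * dr powr (q/p) / b"
  have k0: "0 \<le> k" using b by (simp add: k_def)
  have pt: "ennreal k * indicator {b/2<..<b} t \<le> indicator {b/2<..<b} t * lint M p q f t" for t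
  proof (cases "t \<in> {b/2<..<b}")
    case tin: True
    then have t0: "0 < t" and tb: "b/2 < t" "t < b" using b by auto
    show ?thesis
    proof (cases "distrib_fun M f t = \<infinity>")
      case True then show ?thesis using t0 tin by (simp add: lint_def)
    next
      case False
      define dt where "dt = enn2real (distrib_fun M f t)"
      have "distrib_fun M f b \<le> distrib_fun M f t" using dist_mono[OF f, of t b] tb by simp
      then have dd: "dr \<le> dt" unfolding dr_def dt_def using False
        by (simp add: enn2real_mono top.not_eq_extremum)
      have eq: "(t * dt powr (1/p)) powr q / t = t powr q * dt powr (q/p) / t"
        using t0 dd dr0 by (simp add: powr_mult powr_powr)
      have "(b/2) powr q \<le> t powr q" using tb b q by (intro powr_mono2) auto
      moreover have "dr powr (q/p) \<le> dt powr (q/p)" using dd dr0 p q by (intro powr_mono2) auto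
      ultimately have "(b/2) powr q * dr powr (q/p) \<le> t powr q * dt powr (q/p)"
        by (intro mult_mono) auto
      then have "k \<le> t powr q * dt powr (q/p) / t" unfolding k_def
        using t0 tb by (intro frac_le) auto
      then show ?thesis using tin t0 False eq by (simp add: lint_def dt_def)
    qed
  qed (simp)
  have A: "(\<integral>\<^sup>+ t. ennreal k * indicator {b/2<..<b} t \<partial>lborel) \<le> (\<integral>\<^sup>+ t. indicator {b/2<..<b} t * lint M p q f t \<partial>lborel)"
    by (rule nn_integral_mono[OF pt])
  have "(\<integral>\<^sup>+ t. ennreal k * indicator {b/2<..<b} t \<partial>lborel) = ennreal k * ennreal (b/2)"
    using b by (simp add: nn_integral_cmult_indicator)
  also have "\<dots> = ennreal (2 powr (-q-1) * (b powr q * dr powr (q/p)))"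
  proof -
    have "k * (b/2) = 2 powr (-q-1) * (b powr q * dr powr (q/p))"
      using b unfolding k_def by (simp add: powr_divide powr_diff powr_minus field_simps)
    then show ?thesis using k0 b by (simp add: ennreal_mult[symmetric])
  qed
  finally have "(\<integral>\<^sup>+ t. ennreal k * indicator {b/2<..<b} t \<partial>lborel) = ennreal (2 powr (-q-1) * (b powr q * dr powr (q/p)))" .
  with A show ?thesis unfolding dr_def by simp
qed

lemma lint_lower_top:
  assumes f: "f \<in> borel_measurable M" and b: "0 < b" and inf: "distrib_fun M f b = \<infinity>"
  shows "(\<integral>\<^sup>+ t. indicator {b/2<..<b} t * lint M p q f t \<partial>lborel) = \<infinity>"
proof -
  have "indicator {b/2<..<b} t * lint M p q f t = \<infinity> * indicator {b/2<..<b} t" for t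
  proof (cases "t \<in> {b/2<..<b}")
    case True
    then have "distrib_fun M f b \<le> distrib_fun M f t" using dist_mono[OF f, of t b] by simp
    then have dt: "distrib_fun M f t = \<infinity>" using inf by (simp add: top_unique)
    have "0 < t" using True b by simp
    then show ?thesis using True dt unfolding lint_def by simp
  qed simp
  then have "(\<integral>\<^sup>+ t. indicator {b/2<..<b} t * lint M p q f t \<partial>lborel) = \<infinity> * emeasure lborel {b/2<..<b}"
    by (simp add: nn_integral_cmult_indicator)
  also have "\<dots> = \<infinity>" using b by (simp add: ennreal_top_mult)
  finally show ?thesis .
qed

lemma weak_est:
  assumes L: "in_lorentz M p q f" and p: "0 < p" and q: "0 < q" and b: "0 < b"
  shows "distrib_fun M f b < \<infinity>"
    and "2 powr (-q-1) * (b powr q * enn2real (distrib_fun M f b) powr (q/p))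
           \<le> enn2real (lorentz_integral M p q f)"
proof -
  have f: "f \<in> borel_measurable M" and Lf: "lorentz_integral M p q f < top"
    using L by (auto simp: in_lorentz_def)
  have le: "(\<integral>\<^sup>+ t. indicator {b/2<..<b} t * lint M p q f t \<partial>lborel) \<le> lorentz_integral M p q f"
    unfolding lorentz_integral_lint by (intro nn_integral_mono) (simp split: split_indicator)
  show fin: "distrib_fun M f b < \<infinity>"
  proof (rule ccontr)
    assume "\<not> ?thesis"
    then have "distrib_fun M f b = \<infinity>" by (simp add: less_top[symmetric])
    then show False using lint_lower_top[OF f b] le Lf by (simp add: top_unique)
  qed
  have E: "ennreal (2 powr (-q-1) * (b powr q * enn2real (distrib_fun M f b) powr (q/p)))
     \<le> lorentz_integral M p q f" using lint_lower[OF f p q b fin] le by (rule order_trans)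
  show "2 powr (-q-1) * (b powr q * enn2real (distrib_fun M f b) powr (q/p))
           \<le> enn2real (lorentz_integral M p q f)"
    using enn2real_mono[OF E Lf] by simp
qed

lemma tail_gen:
  assumes sf: "sigma_finite_measure M" and L: "in_lorentz M p q f" and d: "0 < \<delta>"
    and S: "\<And>n. S n \<in> sets borel" "\<And>n. S (Suc n) \<subseteq> S n"
    and ex: "\<And>t. 0 < t \<Longrightarrow> \<exists>n. t \<notin> S n"
  shows "\<exists>n. (\<integral>\<^sup>+ t. indicator (S n) t * lint M p q f t \<partial>lborel) < ennreal \<delta>"
proof -
  have f: "f \<in> borel_measurable M" and Lf: "lorentz_integral M p q f < top"
    using L by (auto simp: in_lorentz_def)
  note [measurable] = lint_measurable[OF sf f] S(1)
  define F where "F n t = indicator (S n) t * lint M p q f t" for n t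
  have dec: "decseq F"
  proof (rule decseq_SucI)
    fix n show "F (Suc n) \<le> F n" unfolding F_def le_fun_def
      using S(2)[of n] by (auto intro!: mult_right_mono split: split_indicator)
  qed
  have meas: "F i \<in> borel_measurable lborel" for i unfolding F_def by measurable
  have fin: "(\<integral>\<^sup>+ t. F i t \<partial>lborel) < \<infinity>" for i
  proof -
    have "(\<integral>\<^sup>+ t. F i t \<partial>lborel) \<le> lorentz_integral M p q f"
      unfolding lorentz_integral_lint F_def by (intro nn_integral_mono) (simp split: split_indicator)
    then show ?thesis using Lf by (simp add: le_less_trans)
  qed
  have inf0: "(INF n. F n t) = 0" for t
  proof (cases "0 < t")
    case True
    then obtain n where "t \<notin> S n" using ex by blast
    then have "F n t = 0" by (simp add: F_def)
    then show ?thesis by (metis INF_lower2 UNIV_I le_zero_eq order_refl)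
  next
    case False
    then have "F 0 t = 0" by (simp add: F_def lint_def)
    then show ?thesis by (metis INF_lower2 UNIV_I le_zero_eq order_refl)
  qed
  have "(\<integral>\<^sup>+ t. (INF n. F n t) \<partial>lborel) = (INF n. integral\<^sup>N lborel (F n))"
    by (rule nn_integral_monotone_convergence_INF_decseq[OF dec meas fin])
  then have "(INF n. integral\<^sup>N lborel (F n)) < ennreal \<delta>" using inf0 d by simp
  then obtain n where "integral\<^sup>N lborel (F n) < ennreal \<delta>" by (auto simp: INF_less_iff)
  then show ?thesis unfolding F_def by blast
qed

lemma tail_large:
  assumes sf: "sigma_finite_measure M" and L: "in_lorentz M p q f" and d: "0 < \<delta>"
    and p: "0 < p" and q: "0 < q"
  shows "\<exists>T>0. \<forall>t\<ge>T. 2 powr (-q-1) * (t powr q * enn2real (distrib_fun M f t) powr (q/p)) \<le> \<delta>"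
proof -
  have f: "f \<in> borel_measurable M" using L by (auto simp: in_lorentz_def)
  have ex: "\<exists>n. t \<notin> {real n..}" for t
    using reals_Archimedean2[of t] by (auto simp: not_le)
  obtain n where n: "(\<integral>\<^sup>+ t. indicator {real n..} t * lint M p q f t \<partial>lborel) < ennreal \<delta>"
    using tail_gen[OF sf L d, of "\<lambda>n. {real n..}", OF _ _ ex] by auto
  show ?thesis
  proof (intro exI[of _ "max 1 (2 * real n)"] conjI allI impI)
    fix t assume t: "max 1 (2 * real n) \<le> t"
    then have t0: "0 < t" by simp
    have "(\<integral>\<^sup>+ s. indicator {t/2<..<t} s * lint M p q f s \<partial>lborel)
        \<le> (\<integral>\<^sup>+ s. indicator {real n..} s * lint M p q f s \<partial>lborel)"
      using t by (intro nn_integral_mono) (auto intro!: mult_right_mono split: split_indicator)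
    then have "ennreal (2 powr (-q-1) * (t powr q * enn2real (distrib_fun M f t) powr (q/p))) < ennreal \<delta>"
      using lint_lower[OF f p q t0 weak_est(1)[OF L p q t0]] n by order
    then show "2 powr (-q-1) * (t powr q * enn2real (distrib_fun M f t) powr (q/p)) \<le> \<delta>"
      by (simp add: ennreal_less_iff less_imp_le)
  qed simp
qed

lemma tail_small:
  assumes sf: "sigma_finite_measure M" and L: "in_lorentz M p q f" and d: "0 < \<delta>"
    and p: "0 < p" and q: "0 < q"
  shows "\<exists>T>0. \<forall>t. 0 < t \<and> t \<le> T \<longrightarrow> 2 powr (-q-1) * (t powr q * enn2real (distrib_fun M f t) powr (q/p)) \<le> \<delta>"
proof -
  have f: "f \<in> borel_measurable M" using L by (auto simp: in_lorentz_def)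
  have ex: "\<exists>n. t \<notin> {..<1/(real n+1)}" if t0: "0 < t" for t
  proof -
    obtain n where "inverse (real (Suc n)) < t" using reals_Archimedean[OF t0] by blast
    then show ?thesis by (intro exI[of _ n]) (simp add: field_simps)
  qed
  have sub: "{..<1/(real (Suc n)+1)} \<subseteq> {..<1/(real n+1)}" for n
    by (auto simp: field_simps)
  obtain n where n: "(\<integral>\<^sup>+ t. indicator {..<1/(real n+1)} t * lint M p q f t \<partial>lborel) < ennreal \<delta>"
    using tail_gen[OF sf L d, of "\<lambda>n. {..<1/(real n+1)}", OF _ sub ex] by auto
  show ?thesis
  proof (intro exI[of _ "1/(real n+1)"] conjI allI impI)
    fix t assume t: "0 < t \<and> t \<le> 1/(real n+1)"
    then have t0: "0 < t" by simp
    have "(\<integral>\<^sup>+ s. indicator {t/2<..<t} s * lint M p q f s \<partial>lborel)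
        \<le> (\<integral>\<^sup>+ s. indicator {..<1/(real n+1)} s * lint M p q f s \<partial>lborel)"
      using t by (intro nn_integral_mono) (auto intro!: mult_right_mono split: split_indicator)
    then have "ennreal (2 powr (-q-1) * (t powr q * enn2real (distrib_fun M f t) powr (q/p))) < ennreal \<delta>"
      using lint_lower[OF f p q t0 weak_est(1)[OF L p q t0]] n by order
    then show "2 powr (-q-1) * (t powr q * enn2real (distrib_fun M f t) powr (q/p)) \<le> \<delta>"
      by (simp add: ennreal_less_iff less_imp_le)
  qed simp
qed

lemma tonelli_bound:
  fixes f :: "'a \<Rightarrow> real" and \<tau> :: "'b \<Rightarrow> 'a"
  assumes sfN: "sigma_finite_measure N" and tau[measurable]: "\<tau> \<in> N \<rightarrow>\<^sub>M M"
    and f[measurable]: "f \<in> borel_measurable M" and c: "0 < c"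
    and Y: "young_function (\<lambda>t. \<Phi> (t powr (1/q)))" and q: "0 < q"
  shows "(\<integral>\<^sup>+ y. ennreal (\<Phi> (\<bar>f (\<tau> y)\<bar> / c)) \<partial>N)
     \<le> (\<integral>\<^sup>+ t. indicator {0<..} t * ennreal (2 * \<Phi> (2*t/c) / t) *
            emeasure N (\<tau> -` {x \<in> space M. t < \<bar>f x\<bar>} \<inter> space N) \<partial>lborel)"
proof -
  note ph = phi_facts[OF Y q]
  define \<Phi>m where "\<Phi>m x = \<Phi> (max 0 x)" for x
  have "mono \<Phi>m" unfolding \<Phi>m_def mono_def using ph(5) by auto
  then have [measurable]: "\<Phi>m \<in> borel_measurable borel" by (rule borel_measurable_mono)
  define H where "H y t = ennreal (if 0 < t \<and> t < \<bar>f (\<tau> y)\<bar> then 2 * \<Phi>m (2*t/c) / t else 0)" for y t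
  have Hm: "(\<lambda>(y,t). H y t) \<in> borel_measurable (N \<Otimes>\<^sub>M lborel)"
    unfolding H_def by measurable
  have pt: "ennreal (\<Phi> (\<bar>f (\<tau> y)\<bar> / c)) \<le> (\<integral>\<^sup>+ t. H y t \<partial>lborel)" for y
  proof (cases "\<bar>f (\<tau> y)\<bar> = 0")
    case True then show ?thesis using ph(1) by simp
  next
    case False
    define r where "r = \<bar>f (\<tau> y)\<bar>"
    have r: "0 < r" using False by (simp add: r_def)
    have Pr: "0 \<le> \<Phi> (r/c)" using ph(2) r c by simp
    have le: "ennreal (2 * \<Phi> (r/c) / r) * indicator {r/2..<r} t \<le> H y t" for t
    proof (cases "t \<in> {r/2..<r}")
      case True
      then have t: "0 < t" "r/2 \<le> t" "t < r" using r by auto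
      have "\<Phi> (r/c) \<le> \<Phi> (2*t/c)" using ph(5)[of "r/c" "2*t/c"] t c r
        by (simp add: divide_right_mono)
      then have "2 * \<Phi> (r/c) / r \<le> 2 * \<Phi> (2*t/c) / t"
        using t Pr by (intro frac_le) auto
      moreover have "\<Phi>m (2*t/c) = \<Phi> (2*t/c)" using t c by (simp add: \<Phi>m_def)
      ultimately show ?thesis using True t by (auto simp: H_def r_def intro!: ennreal_leI)
    qed simp
    have "(\<integral>\<^sup>+ t. ennreal (2 * \<Phi> (r/c) / r) * indicator {r/2..<r} t \<partial>lborel) \<le> (\<integral>\<^sup>+ t. H y t \<partial>lborel)"
      by (rule nn_integral_mono[OF le])
    moreover have "(\<integral>\<^sup>+ t. ennreal (2 * \<Phi> (r/c) / r) * indicator {r/2..<r} t \<partial>lborel) = ennreal (\<Phi> (r/c))"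
    proof -
      have "(\<integral>\<^sup>+ t. ennreal (2 * \<Phi> (r/c) / r) * indicator {r/2..<r} t \<partial>lborel)
          = ennreal (2 * \<Phi> (r/c) / r) * ennreal (r/2)"
        using r by (simp add: nn_integral_cmult_indicator)
      also have "\<dots> = ennreal (2 * \<Phi> (r/c) / r * (r/2))"
        using r Pr by (subst ennreal_mult[symmetric]) auto
      also have "2 * \<Phi> (r/c) / r * (r/2) = \<Phi> (r/c)" using r by simp
      finally show ?thesis .
    qed
    ultimately show ?thesis by (simp add: r_def)
  qed
  interpret pair_sigma_finite N lborel
    unfolding pair_sigma_finite_def using sfN lborel.sigma_finite_measure_axioms by auto
  have "(\<integral>\<^sup>+ y. ennreal (\<Phi> (\<bar>f (\<tau> y)\<bar> / c)) \<partial>N) \<le> (\<integral>\<^sup>+ y. (\<integral>\<^sup>+ t. H y t \<partial>lborel) \<partial>N)"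
    by (rule nn_integral_mono[OF pt])
  also have "\<dots> = (\<integral>\<^sup>+ t. (\<integral>\<^sup>+ y. H y t \<partial>N) \<partial>lborel)"
    using Fubini'[OF Hm] by simp
  also have "\<dots> = (\<integral>\<^sup>+ t. indicator {0<..} t * ennreal (2 * \<Phi> (2*t/c) / t) *
            emeasure N (\<tau> -` {x \<in> space M. t < \<bar>f x\<bar>} \<inter> space N) \<partial>lborel)"
  proof (rule nn_integral_cong)
    fix t
    show "(\<integral>\<^sup>+ y. H y t \<partial>N) = indicator {0<..} t * ennreal (2 * \<Phi> (2*t/c) / t) *
            emeasure N (\<tau> -` {x \<in> space M. t < \<bar>f x\<bar>} \<inter> space N)"
    proof (cases "0 < t")
      case False then show ?thesis by (simp add: H_def)
    next
      case True
      have set: "\<tau> -` {x \<in> space M. t < \<bar>f x\<bar>} \<inter> space N \<in> sets N"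
        using measurable_sets[OF tau dist_set[OF f]] by simp
      have "(\<integral>\<^sup>+ y. H y t \<partial>N) = (\<integral>\<^sup>+ y. ennreal (2 * \<Phi> (2*t/c) / t) * indicator (\<tau> -` {x \<in> space M. t < \<bar>f x\<bar>} \<inter> space N) y \<partial>N)"
        using True c measurable_space[OF tau]
        by (intro nn_integral_cong) (auto simp: H_def \<Phi>m_def split: split_indicator)
      also have "\<dots> = ennreal (2 * \<Phi> (2*t/c) / t) * emeasure N (\<tau> -` {x \<in> space M. t < \<bar>f x\<bar>} \<inter> space N)"
        using set by (rule nn_integral_cmult_indicator)
      finally show ?thesis using True by simp
    qed
  qed
  finally show ?thesis .
qed

lemma carl_fin:
  fixes f :: "'a \<Rightarrow> real"
  assumes Y: "young_function (\<lambda>t. \<Phi> (t powr (1/q)))" and q: "0 < q" and D: "0 < D" and p: "0 < p"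
    and f: "f \<in> borel_measurable M"
    and carl: "\<forall>E\<in>sets M. emeasure N (\<tau> -` E \<inter> space N) \<le> carleson_bound \<Phi> p D (emeasure M E)"
    and fin: "distrib_fun M f t < top"
  shows "emeasure N (\<tau> -` {x \<in> space M. t < \<bar>f x\<bar>} \<inter> space N) < top"
proof -
  note ph = phi_facts[OF Y q]
  let ?E = "{x \<in> space M. t < \<bar>f x\<bar>}"
  have E: "?E \<in> sets M" by (rule dist_set[OF f])
  have dE: "emeasure M ?E = distrib_fun M f t" by (simp add: distrib_fun_def)
  have le: "emeasure N (\<tau> -` ?E \<inter> space N) \<le> carleson_bound \<Phi> p D (distrib_fun M f t)"
    using carl E dE by auto
  show ?thesis
  proof (cases "distrib_fun M f t = 0")
    case True then show ?thesis using le by (simp add: carleson_bound_def)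
  next
    case False
    define dr where "dr = enn2real (distrib_fun M f t)"
    have dr: "0 < dr" using False fin by (simp add: dr_def enn2real_positive_iff zero_less_iff_neq_zero)
    define a where "a = 1 / (D * dr powr (1/p))"
    have a: "0 < a" using dr D by (simp add: a_def)
    have "carleson_bound \<Phi> p D (distrib_fun M f t) = ennreal (1 / \<Phi> a)"
      using False fin ph(3)[OF a] by (simp add: carleson_bound_def a_def dr_def inverse_ennreal divide_inverse)
    then show ?thesis using le by (simp add: le_less_trans)
  qed
qed

lemma good_bound:
  fixes f :: "'a \<Rightarrow> real"
  assumes Y: "young_function (\<lambda>t. \<Phi> (t powr (1/q)))" and q: "0 < q" and D: "0 < D" and p: "0 < p"
    and f: "f \<in> borel_measurable M" and c: "0 < c" and t: "0 < t"
    and carl: "\<forall>E\<in>sets M. emeasure N (\<tau> -` E \<inter> space N) \<le> carleson_bound \<Phi> p D (emeasure M E)"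
    and fin: "distrib_fun M f t < top"
    and cond: "(2*t*D/c) powr q * enn2real (distrib_fun M f t) powr (q/p) \<le> 1"
  shows "ennreal (2 * \<Phi> (2*t/c) / t) * emeasure N (\<tau> -` {x \<in> space M. t < \<bar>f x\<bar>} \<inter> space N)
     \<le> ennreal (2 * (2*D/c) powr q) * lint M p q f t"
proof -
  note ph = phi_facts[OF Y q]
  let ?E = "{x \<in> space M. t < \<bar>f x\<bar>}"
  have E: "?E \<in> sets M" by (rule dist_set[OF f])
  have dE: "emeasure M ?E = distrib_fun M f t" by (simp add: distrib_fun_def)
  have le: "emeasure N (\<tau> -` ?E \<inter> space N) \<le> carleson_bound \<Phi> p D (distrib_fun M f t)"
    using carl E dE by auto
  show ?thesis
  proof (cases "distrib_fun M f t = 0")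
    case True then show ?thesis using le by (simp add: carleson_bound_def)
  next
    case False
    define dr where "dr = enn2real (distrib_fun M f t)"
    have dr: "0 < dr" using False fin by (simp add: dr_def enn2real_positive_iff zero_less_iff_neq_zero)
    define a where "a = 1 / (D * dr powr (1/p))"
    have a: "0 < a" using dr D by (simp add: a_def)
    have Pa: "0 < \<Phi> a" by (rule ph(3)[OF a])
    have cb: "carleson_bound \<Phi> p D (distrib_fun M f t) = ennreal (1 / \<Phi> a)"
      using False fin Pa by (simp add: carleson_bound_def a_def dr_def inverse_ennreal divide_inverse)
    have li: "lint M p q f t = ennreal ((t * dr powr (1/p)) powr q / t)"
      using t fin by (simp add: lint_def dr_def)
    define B where "B = 2*t*D*dr powr (1/p)/c"
    have B0: "0 \<le> B" using t D c dr by (simp add: B_def)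
    have Bq: "B powr q = (2*t*D/c) powr q * dr powr (q/p)"
    proof -
      have "B powr q = ((2*t*D/c) * dr powr (1/p)) powr q" by (simp add: B_def)
      also have "\<dots> = (2*t*D/c) powr q * (dr powr (1/p)) powr q"
        using powr_mult[of "2*t*D/c" "dr powr (1/p)" q] t D c dr by simp
      also have "(dr powr (1/p)) powr q = dr powr (q/p)" by (simp add: powr_powr)
      finally show ?thesis .
    qed
    have B1: "B \<le> 1"
    proof (rule ccontr)
      assume "\<not> B \<le> 1"
      then have "1 < B powr q" using q by (simp add: less_powr_iff)
      then show False using cond Bq by (simp add: dr_def)
    qed
    have x: "2*t/c = B * a" using dr D c by (simp add: B_def a_def field_simps)
    have Px: "\<Phi> (2*t/c) \<le> B powr q * \<Phi> a"
    proof -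
      have "\<Phi> (B*a) \<le> (B*a/a) powr q * \<Phi> a"
        using B0 B1 a by (intro ph(4)) (auto simp: mult_le_cancel_right1 mult_left_le_one_le)
      then show ?thesis using x a by simp
    qed
    have Bq2: "B powr q = (2*D/c) powr q * (t * dr powr (1/p)) powr q"
    proof -
      have "B = (2*D/c) * (t * dr powr (1/p))" by (simp add: B_def)
      then have "B powr q = ((2*D/c) * (t * dr powr (1/p))) powr q" by simp
      also have "\<dots> = (2*D/c) powr q * (t * dr powr (1/p)) powr q"
      proof -
        have n1: "0 \<le> 2*D/c" using D c by simp
        have n2: "0 \<le> t * dr powr (1/p)" using t by simp
        show ?thesis by (rule powr_mult)
      qed
      finally show ?thesis .
    qed
    have real: "2 * \<Phi> (2*t/c) / t * (1 / \<Phi> a) \<le> 2 * (2*D/c) powr q * ((t * dr powr (1/p)) powr q / t)"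
    proof -
      have "2 * \<Phi> (2*t/c) / t * (1 / \<Phi> a) = 2 * (\<Phi> (2*t/c) / \<Phi> a) / t" by simp
      also have "\<dots> \<le> 2 * (B powr q) / t"
        using Px Pa t by (intro divide_right_mono mult_left_mono) (auto simp: divide_le_eq)
      also have "\<dots> = 2 * (2*D/c) powr q * ((t * dr powr (1/p)) powr q / t)" using Bq2 by simp
      finally show ?thesis .
    qed
    have P2: "0 \<le> \<Phi> (2*t/c)" using ph(2) t c by simp
    have "ennreal (2 * \<Phi> (2*t/c) / t) * emeasure N (\<tau> -` ?E \<inter> space N)
        \<le> ennreal (2 * \<Phi> (2*t/c) / t) * ennreal (1 / \<Phi> a)"
      using le cb by (intro mult_left_mono) auto
    also have "\<dots> = ennreal (2 * \<Phi> (2*t/c) / t * (1 / \<Phi> a))"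
      using P2 t Pa by (subst ennreal_mult[symmetric]) auto
    also have "\<dots> \<le> ennreal (2 * (2*D/c) powr q * ((t * dr powr (1/p)) powr q / t))"
      using real by (rule ennreal_leI)
    also have "\<dots> = ennreal (2 * (2*D/c) powr q) * lint M p q f t"
      unfolding li using t by (subst ennreal_mult[symmetric]) auto
    finally show ?thesis .
  qed
qed

lemma bad_bound:
  fixes f :: "'a \<Rightarrow> real"
  assumes Y: "young_function (\<lambda>t. \<Phi> (t powr (1/q)))" and q: "0 < q"
    and f: "f \<in> borel_measurable M" and c: "0 < c" and t: "0 < t1" "t1 \<le> t" "t \<le> t2"
    and tau: "\<tau> \<in> N \<rightarrow>\<^sub>M M"
  shows "ennreal (2 * \<Phi> (2*t/c) / t) * emeasure N (\<tau> -` {x \<in> space M. t < \<bar>f x\<bar>} \<inter> space N)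
     \<le> ennreal (2 * \<Phi> (2*t2/c) / t1) * emeasure N (\<tau> -` {x \<in> space M. t1 < \<bar>f x\<bar>} \<inter> space N)"
proof (intro mult_mono)
  note ph = phi_facts[OF Y q]
  have "\<Phi> (2*t/c) \<le> \<Phi> (2*t2/c)" using t c by (intro ph(5)) (auto simp: divide_right_mono)
  moreover have "0 \<le> \<Phi> (2*t/c)" using ph(2) t c by simp
  ultimately have "2 * \<Phi> (2*t/c) / t \<le> 2 * \<Phi> (2*t2/c) / t1" using t by (intro frac_le) auto
  then show "ennreal (2 * \<Phi> (2*t/c) / t) \<le> ennreal (2 * \<Phi> (2*t2/c) / t1)" by (rule ennreal_leI)
  show "emeasure N (\<tau> -` {x \<in> space M. t < \<bar>f x\<bar>} \<inter> space N) \<le> emeasure N (\<tau> -` {x \<in> space M. t1 < \<bar>f x\<bar>} \<inter> space N)"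
    using t measurable_sets[OF tau dist_set[OF f, of t1]] by (intro emeasure_mono) auto
qed auto

lemma cond_from:
  fixes t c D q X :: real
  assumes t: "0 < t" and c: "0 < c" and D: "0 < D" and X: "0 \<le> X"
    and h: "t powr q * X \<le> (c/(2*D)) powr q"
  shows "(2*t*D/c) powr q * X \<le> 1"
proof -
  have e1: "(2*t*D/c) powr q = (2*D/c) powr q * t powr q"
  proof -
    have "2*t*D/c = (2*D/c) * t" by simp
    then show ?thesis by (simp only: powr_mult)
  qed
  have e2: "(2*D/c) powr q * (c/(2*D)) powr q = 1"
  proof -
    have "(2*D/c) powr q * (c/(2*D)) powr q = ((2*D/c) * (c/(2*D))) powr q" by (simp only: powr_mult)
    also have "(2*D/c) * (c/(2*D)) = 1" using c D by simp
    finally show ?thesis by simp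
  qed
  have "(2*t*D/c) powr q * X = (2*D/c) powr q * (t powr q * X)" using e1 by simp
  also have "\<dots> \<le> (2*D/c) powr q * (c/(2*D)) powr q" using h by (intro mult_left_mono) auto
  finally show ?thesis using e2 by simp
qed

lemma int_bound_good:
  fixes f :: "'a \<Rightarrow> real" and \<tau> :: "'b \<Rightarrow> 'a"
  assumes sfM: "sigma_finite_measure M" and sfN: "sigma_finite_measure N" and tau: "\<tau> \<in> N \<rightarrow>\<^sub>M M"
    and p: "0 < p" and q: "0 < q" and Y: "young_function (\<lambda>t. \<Phi> (t powr (1/q)))"
    and D: "0 < D" and carl: "\<forall>E\<in>sets M. emeasure N (\<tau> -` E \<inter> space N) \<le> carleson_bound \<Phi> p D (emeasure M E)"
    and L: "in_lorentz M p q f" and c: "0 < c"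
    and good: "\<And>t. 0 < t \<Longrightarrow> (2*t*D/c) powr q * enn2real (distrib_fun M f t) powr (q/p) \<le> 1"
  shows "(\<integral>\<^sup>+ y. ennreal (\<Phi> (\<bar>f (\<tau> y)\<bar> / c)) \<partial>N) \<le> ennreal (2 * (2*D/c) powr q) * lorentz_integral M p q f"
proof -
  have f: "f \<in> borel_measurable M" using L by (simp add: in_lorentz_def)
  have "(\<integral>\<^sup>+ y. ennreal (\<Phi> (\<bar>f (\<tau> y)\<bar> / c)) \<partial>N)
     \<le> (\<integral>\<^sup>+ t. indicator {0<..} t * ennreal (2 * \<Phi> (2*t/c) / t) *
            emeasure N (\<tau> -` {x \<in> space M. t < \<bar>f x\<bar>} \<inter> space N) \<partial>lborel)"
    by (rule tonelli_bound[OF sfN tau f c Y q])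
  also have "\<dots> \<le> (\<integral>\<^sup>+ t. ennreal (2 * (2*D/c) powr q) * lint M p q f t \<partial>lborel)"
  proof (rule nn_integral_mono)
    fix t
    show "indicator {0<..} t * ennreal (2 * \<Phi> (2*t/c) / t) *
            emeasure N (\<tau> -` {x \<in> space M. t < \<bar>f x\<bar>} \<inter> space N) \<le> ennreal (2 * (2*D/c) powr q) * lint M p q f t"
    proof (cases "0 < t")
      case True
      have "ennreal (2 * \<Phi> (2*t/c) / t) * emeasure N (\<tau> -` {x \<in> space M. t < \<bar>f x\<bar>} \<inter> space N)
         \<le> ennreal (2 * (2*D/c) powr q) * lint M p q f t"
        by (rule good_bound[OF Y q D p f c True carl _ good[OF True]])
           (use weak_est(1)[OF L p q True] in simp)
      then show ?thesis using True by simp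
    qed simp
  qed
  also have "\<dots> = ennreal (2 * (2*D/c) powr q) * lorentz_integral M p q f"
    unfolding lorentz_integral_lint by (rule nn_integral_cmult[OF lint_measurable[OF sfM f]])
  finally show ?thesis .
qed

lemma int_finite:
  fixes f :: "'a \<Rightarrow> real" and \<tau> :: "'b \<Rightarrow> 'a"
  assumes sfM: "sigma_finite_measure M" and sfN: "sigma_finite_measure N" and tau: "\<tau> \<in> N \<rightarrow>\<^sub>M M"
    and p: "0 < p" and q: "0 < q" and Y: "young_function (\<lambda>t. \<Phi> (t powr (1/q)))"
    and D: "0 < D" and carl: "\<forall>E\<in>sets M. emeasure N (\<tau> -` E \<inter> space N) \<le> carleson_bound \<Phi> p D (emeasure M E)"
    and L: "in_lorentz M p q f" and c: "0 < c"
  shows "(\<integral>\<^sup>+ y. ennreal (\<Phi> (\<bar>f (\<tau> y)\<bar> / c)) \<partial>N) < \<infinity>"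
proof -
  have f: "f \<in> borel_measurable M" and Lf: "lorentz_integral M p q f < top"
    using L by (auto simp: in_lorentz_def)
  define \<delta> where "\<delta> = 2 powr (-q-1) * (c/(2*D)) powr q"
  have d0: "0 < \<delta>" using c D by (simp add: \<delta>_def)
  obtain T where T: "0 < T" "\<And>t. t \<ge> T \<Longrightarrow> 2 powr (-q-1) * (t powr q * enn2real (distrib_fun M f t) powr (q/p)) \<le> \<delta>"
    using tail_large[OF sfM L d0 p q] by blast
  obtain T0 where T0: "0 < T0" "\<And>t. 0 < t \<Longrightarrow> t \<le> T0 \<Longrightarrow> 2 powr (-q-1) * (t powr q * enn2real (distrib_fun M f t) powr (q/p)) \<le> \<delta>"
    using tail_small[OF sfM L d0 p q] by blast
  define n where "n t = emeasure N (\<tau> -` {x \<in> space M. t < \<bar>f x\<bar>} \<inter> space N)" for t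
  define K where "K = ennreal (2 * \<Phi> (2*T/c) / T0) * n T0"
  have Kfin: "K < top"
  proof -
    have "n T0 < top" unfolding n_def
      by (rule carl_fin[OF Y q D p f carl]) (use weak_est(1)[OF L p q T0(1)] in simp)
    then show ?thesis unfolding K_def by (simp add: ennreal_mult_less_top)
  qed
  have gd: "(2*t*D/c) powr q * enn2real (distrib_fun M f t) powr (q/p) \<le> 1"
    if "0 < t" "2 powr (-q-1) * (t powr q * enn2real (distrib_fun M f t) powr (q/p)) \<le> \<delta>" for t
  proof (rule cond_from[OF that(1) c D])
    show "t powr q * enn2real (distrib_fun M f t) powr (q/p) \<le> (c/(2*D)) powr q"
      using that(2) unfolding \<delta>_def by simp
  qed simp
  have pt: "indicator {0<..} t * ennreal (2 * \<Phi> (2*t/c) / t) * n t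
      \<le> ennreal (2 * (2*D/c) powr q) * lint M p q f t + K * indicator {T0..T} t" for t
  proof (cases "0 < t")
    case False then show ?thesis by simp
  next
    case True
    show ?thesis
    proof (cases "t \<le> T0 \<or> T \<le> t")
      case True': True
      have "2 powr (-q-1) * (t powr q * enn2real (distrib_fun M f t) powr (q/p)) \<le> \<delta>"
        using True' T T0 True by auto
      then have "ennreal (2 * \<Phi> (2*t/c) / t) * n t \<le> ennreal (2 * (2*D/c) powr q) * lint M p q f t"
        unfolding n_def
        by (intro good_bound[OF Y q D p f c True carl] gd[OF True])
           (use weak_est(1)[OF L p q True] in simp)
      then show ?thesis using True by (simp add: add_increasing2)
    next
      case False
      then have tt: "T0 \<le> t" "t \<le> T" by auto
      have "ennreal (2 * \<Phi> (2*t/c) / t) * n t \<le> K"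
        unfolding n_def K_def by (rule bad_bound[OF Y q f c T0(1) tt tau])
      then show ?thesis using True tt by (simp add: add_increasing)
    qed
  qed
  have "(\<integral>\<^sup>+ y. ennreal (\<Phi> (\<bar>f (\<tau> y)\<bar> / c)) \<partial>N)
     \<le> (\<integral>\<^sup>+ t. indicator {0<..} t * ennreal (2 * \<Phi> (2*t/c) / t) * n t \<partial>lborel)"
    unfolding n_def by (rule tonelli_bound[OF sfN tau f c Y q])
  also have "\<dots> \<le> (\<integral>\<^sup>+ t. ennreal (2 * (2*D/c) powr q) * lint M p q f t + K * indicator {T0..T} t \<partial>lborel)"
    by (rule nn_integral_mono[OF pt])
  also have "\<dots> = ennreal (2 * (2*D/c) powr q) * lorentz_integral M p q f + K * emeasure lborel {T0..T}"
    unfolding lorentz_integral_lint using lint_measurable[OF sfM f]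
    by (subst nn_integral_add) (auto simp: nn_integral_cmult nn_integral_cmult_indicator)
  also have "\<dots> < \<infinity>"
    using Lf Kfin by (simp add: ennreal_mult_less_top emeasure_lborel_Icc_eq)
  finally show ?thesis .
qed

lemma orlicz_norm_le:
  fixes g :: "'b \<Rightarrow> real"
  assumes "0 < c" "(\<integral>\<^sup>+ y. ennreal (\<Phi> (\<bar>g y\<bar> / c)) \<partial>N) \<le> 1"
  shows "orlicz_norm N \<Phi> g \<le> c"
  unfolding orlicz_norm_def using assms by (intro cInf_lower) (auto intro: bdd_belowI[of _ 0])

lemma orlicz_norm_le0:
  fixes g :: "'b \<Rightarrow> real"
  assumes "\<And>c. 0 < c \<Longrightarrow> (\<integral>\<^sup>+ y. ennreal (\<Phi> (\<bar>g y\<bar> / c)) \<partial>N) \<le> 1"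
  shows "orlicz_norm N \<Phi> g \<le> 0"
proof (rule ccontr)
  assume "\<not> ?thesis"
  then have pos: "0 < orlicz_norm N \<Phi> g" by simp
  have "orlicz_norm N \<Phi> g \<le> orlicz_norm N \<Phi> g / 2"
    using pos assms[of "orlicz_norm N \<Phi> g / 2"] by (intro orlicz_norm_le) auto
  then show False using pos by simp
qed

lemma backward:
  fixes \<tau> :: "'b \<Rightarrow> 'a"
  assumes sfM: "sigma_finite_measure M" and sfN: "sigma_finite_measure N" and tau: "\<tau> \<in> N \<rightarrow>\<^sub>M M"
    and p: "0 < p" and q: "0 < q" and Y: "young_function (\<lambda>t. \<Phi> (t powr (1/q)))"
    and D1: "1 \<le> D" and carl: "\<forall>E\<in>sets M. emeasure N (\<tau> -` E \<inter> space N) \<le> carleson_bound \<Phi> p D (emeasure M E)"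
  shows "\<forall>f. in_lorentz M p q f \<longrightarrow> in_orlicz N \<Phi> (f \<circ> \<tau>) \<and>
            orlicz_norm N \<Phi> (f \<circ> \<tau>) \<le> (2*D*2 powr ((q+1)/q)) * lorentz_norm M p q f"
proof (intro allI impI conjI)
  fix f :: "'a \<Rightarrow> real" assume L: "in_lorentz M p q f"
  have D: "0 < D" using D1 by simp
  have f: "f \<in> borel_measurable M" and Lf: "lorentz_integral M p q f < top"
    using L by (auto simp: in_lorentz_def)
  show "in_orlicz N \<Phi> (f \<circ> \<tau>)"
    unfolding in_orlicz_def
  proof (intro conjI allI impI)
    show "f \<circ> \<tau> \<in> borel_measurable N" using f tau by (rule measurable_comp[rotated])
    fix \<epsilon> :: real assume e: "0 < \<epsilon>"
    have "(\<integral>\<^sup>+ y. ennreal (\<Phi> (\<bar>f (\<tau> y)\<bar> / (1/\<epsilon>))) \<partial>N) < \<infinity>"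
      by (rule int_finite[OF sfM sfN tau p q Y D carl L]) (use e in simp)
    then show "(\<integral>\<^sup>+ y. ennreal (\<Phi> (\<epsilon> * \<bar>(f \<circ> \<tau>) y\<bar>)) \<partial>N) < \<infinity>"
      by (simp add: mult.commute)
  qed
  define Lr where "Lr = enn2real (lorentz_integral M p q f)"
  have LLr: "lorentz_integral M p q f = ennreal Lr" using Lf by (simp add: Lr_def less_top)
  have Lr0: "0 \<le> Lr" by (simp add: Lr_def)
  have wk: "t powr q * enn2real (distrib_fun M f t) powr (q/p) \<le> 2 powr (q+1) * Lr" if t: "0 < t" for t
  proof -
    have "2 powr (-q-1) * (t powr q * enn2real (distrib_fun M f t) powr (q/p)) \<le> Lr"
      using weak_est(2)[OF L p q t] by (simp add: Lr_def)
    then have "2 powr (q+1) * (2 powr (-q-1) * (t powr q * enn2real (distrib_fun M f t) powr (q/p))) \<le> 2 powr (q+1) * Lr"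
      by (intro mult_left_mono) auto
    moreover have "2 powr (q+1) * 2 powr (-q-1) = (1::real)"
      by (simp add: powr_add[symmetric])
    ultimately show ?thesis by (simp add: mult.assoc[symmetric])
  qed
  show "orlicz_norm N \<Phi> (f \<circ> \<tau>) \<le> (2*D*2 powr ((q+1)/q)) * lorentz_norm M p q f"
  proof (cases "Lr = 0")
    case True
    have "orlicz_norm N \<Phi> (f \<circ> \<tau>) \<le> 0"
    proof (rule orlicz_norm_le0)
      fix c :: real assume c: "0 < c"
      have "(\<integral>\<^sup>+ y. ennreal (\<Phi> (\<bar>f (\<tau> y)\<bar> / c)) \<partial>N) \<le> ennreal (2 * (2*D/c) powr q) * lorentz_integral M p q f"
      proof (rule int_bound_good[OF sfM sfN tau p q Y D carl L c])
        fix t :: real assume t: "0 < t"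
        show "(2*t*D/c) powr q * enn2real (distrib_fun M f t) powr (q/p) \<le> 1"
        proof -
          have h1: "t powr q * enn2real (distrib_fun M f t) powr (q/p) \<le> 0" using wk[OF t] True by simp
          have h2: "0 \<le> (c/(2*D)) powr q" by simp
          show ?thesis by (rule cond_from[OF t c D _ order_trans[OF h1 h2]]) simp
        qed
      qed
      then show "(\<integral>\<^sup>+ y. ennreal (\<Phi> (\<bar>(f \<circ> \<tau>) y\<bar> / c)) \<partial>N) \<le> 1"
        using LLr True by simp
    qed
    then show ?thesis using True by (simp add: lorentz_norm_def Lr_def)
  next
    case False
    then have Lp: "0 < Lr" using Lr0 by simp
    define K where "K = 2 powr ((q+1)/q) * Lr powr (1/q)"
    have K0: "0 < K" using Lp by (simp add: K_def)
    define c where "c = 2*D*K"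
    have c: "0 < c" using K0 D by (simp add: c_def)
    have Kq: "K powr q = 2 powr (q+1) * Lr"
    proof -
      have "K powr q = (2 powr ((q+1)/q)) powr q * (Lr powr (1/q)) powr q"
        unfolding K_def by (rule powr_mult)
      also have "\<dots> = 2 powr (q+1) * Lr" using q Lp by (simp add: powr_powr)
      finally show ?thesis .
    qed
    have cK: "c/(2*D) = K" using D by (simp add: c_def)
    have "(\<integral>\<^sup>+ y. ennreal (\<Phi> (\<bar>f (\<tau> y)\<bar> / c)) \<partial>N) \<le> ennreal (2 * (2*D/c) powr q) * lorentz_integral M p q f"
    proof (rule int_bound_good[OF sfM sfN tau p q Y D carl L c])
      fix t :: real assume t: "0 < t"
      show "(2*t*D/c) powr q * enn2real (distrib_fun M f t) powr (q/p) \<le> 1"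
        by (rule cond_from[OF t c D]) (use wk[OF t] Kq cK in simp_all)
    qed
    also have "\<dots> = ennreal (2 * (2*D/c) powr q * Lr)"
      unfolding LLr using Lr0 by (subst ennreal_mult[symmetric]) auto
    also have "\<dots> \<le> 1"
    proof -
      have "(2*D/c) powr q = 1 / K powr q"
      proof -
        have "2*D/c = 1/K" using cK D c K0 by (simp add: field_simps)
        then show ?thesis using K0 by (simp add: powr_divide)
      qed
      then have "2 * (2*D/c) powr q * Lr = 2 / 2 powr (q+1)" using Kq Lp by simp
      also have "\<dots> \<le> 1"
      proof -
        have "2 powr 1 \<le> 2 powr (q+1)" using q by (intro powr_mono) auto
        then show ?thesis by simp
      qed
      finally show ?thesis by simp
    qed
    finally have "orlicz_norm N \<Phi> (f \<circ> \<tau>) \<le> c" by (intro orlicz_norm_le[OF c]) simp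
    also have "c = (2*D*2 powr ((q+1)/q)) * lorentz_norm M p q f"
      by (simp add: c_def K_def lorentz_norm_def Lr_def)
    finally show ?thesis .
  qed
qed

lemma lorentz_indicator:
  assumes E: "E \<in> sets M" and m: "emeasure M E = ennreal mr" and mr: "0 \<le> mr"
    and p: "0 < p" and q: "0 < q"
  shows "lorentz_integral M p q (indicator E :: 'a \<Rightarrow> real) \<le> ennreal (mr powr (q/p) / q)"
proof -
  let ?f = "indicator E :: 'a \<Rightarrow> real"
  have sub: "E \<subseteq> space M" using sets.sets_into_space[OF E] .
  have d1: "distrib_fun M ?f t = ennreal mr" if "0 \<le> t" "t < 1" for t
  proof -
    have "{x \<in> space M. t < \<bar>?f x\<bar>} = E" using sub that by (auto split: split_indicator)
    then show ?thesis using m by (simp add: distrib_fun_def)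
  qed
  have d2: "distrib_fun M ?f t = 0" if "1 \<le> t" for t
  proof -
    have "{x \<in> space M. t < \<bar>?f x\<bar>} = {}" using that by (auto split: split_indicator)
    then show ?thesis unfolding distrib_fun_def by (metis emeasure_empty)
  qed
  have pt: "lint M p q ?f t \<le> ennreal (mr powr (q/p)) * (ennreal (t powr (q-1)) * indicator {0..1} t)" for t
  proof (cases "0 < t")
    case False then show ?thesis by (simp add: lint_def)
  next
    case True
    show ?thesis
    proof (cases "t < 1")
      case True': True
      have "(t * mr powr (1/p)) powr q / t = mr powr (q/p) * t powr (q-1)"
        using True mr by (simp add: powr_mult powr_powr powr_diff)
      then show ?thesis using True True' d1[of t] mr
        by (simp add: lint_def ennreal_mult[symmetric] mult.commute)
    next
      case False
      then show ?thesis using True d2[of t] by (simp add: lint_def)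
    qed
  qed
  have hi: "((\<lambda>x. x powr (q-1)) has_integral (1/q)) {0..1}"
    using has_integral_powr_from_0[of "q-1" 1] q by simp
  have int1: "(\<integral>\<^sup>+ t. ennreal (t powr (q-1)) * indicator {0..1} t \<partial>lborel) = ennreal (1/q)"
    by (rule nn_integral_has_integral_lebesgue'[OF _ hi]) simp
  have "lorentz_integral M p q ?f \<le> (\<integral>\<^sup>+ t. ennreal (mr powr (q/p)) * (ennreal (t powr (q-1)) * indicator {0..1} t) \<partial>lborel)"
    unfolding lorentz_integral_lint by (rule nn_integral_mono[OF pt])
  also have "\<dots> = ennreal (mr powr (q/p)) * ennreal (1/q)"
    by (subst nn_integral_cmult) (auto simp: int1)
  also have "\<dots> = ennreal (mr powr (q/p) / q)"
    using q by (simp add: ennreal_mult[symmetric])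
  finally show ?thesis .
qed

lemma indicator_int:
  fixes h :: "real \<Rightarrow> real"
  assumes tau: "\<tau> \<in> N \<rightarrow>\<^sub>M M" and E: "E \<in> sets M" and h0: "h 0 = 0"
  shows "(\<integral>\<^sup>+ y. ennreal (h \<bar>(indicator E \<circ> \<tau>) y\<bar>) \<partial>N) = ennreal (h 1) * emeasure N (\<tau> -` E \<inter> space N)"
proof -
  have F: "\<tau> -` E \<inter> space N \<in> sets N" using measurable_sets[OF tau E] .
  have "(\<integral>\<^sup>+ y. ennreal (h \<bar>(indicator E \<circ> \<tau>) y\<bar>) \<partial>N) = (\<integral>\<^sup>+ y. ennreal (h 1) * indicator (\<tau> -` E \<inter> space N) y \<partial>N)"
    by (intro nn_integral_cong) (auto simp: h0 split: split_indicator)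
  also have "\<dots> = ennreal (h 1) * emeasure N (\<tau> -` E \<inter> space N)"
    by (rule nn_integral_cmult_indicator[OF F])
  finally show ?thesis .
qed

lemma forward:
  fixes \<tau> :: "'b \<Rightarrow> 'a" and C :: real
  assumes tau: "\<tau> \<in> N \<rightarrow>\<^sub>M M" and ns: "nonsingular N M \<tau>"
    and p: "0 < p" and q: "0 < q" and Y: "young_function (\<lambda>t. \<Phi> (t powr (1/q)))"
    and hC: "\<forall>f. in_lorentz M p q f \<longrightarrow> in_orlicz N \<Phi> (f \<circ> \<tau>) \<and>
            orlicz_norm N \<Phi> (f \<circ> \<tau>) \<le> C * lorentz_norm M p q f"
  shows "\<exists>D\<ge>1. \<forall>E\<in>sets M.
            emeasure N (\<tau> -` E \<inter> space N) \<le> carleson_bound \<Phi> p D (emeasure M E)"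
proof -
  note ph = phi_facts[OF Y q]
  define K0 where "K0 = (1/q) powr (1/q)"
  define D where "D = max 1 (\<bar>C\<bar> * K0 + 1)"
  have K0: "0 \<le> K0" by (simp add: K0_def)
  show ?thesis
  proof (intro exI[of _ D] conjI ballI)
    show "1 \<le> D" by (simp add: D_def)
    fix E assume E: "E \<in> sets M"
    define F where "F = \<tau> -` E \<inter> space N"
    have Fs: "F \<in> sets N" unfolding F_def using measurable_sets[OF tau E] .
    show "emeasure N (\<tau> -` E \<inter> space N) \<le> carleson_bound \<Phi> p D (emeasure M E)"
    proof (cases "emeasure M E = 0")
      case True
      then have "emeasure N (\<tau> -` E \<inter> space N) = 0" using ns E by (simp add: nonsingular_def)
      then show ?thesis by simp
    next
      case m0: False
      show ?thesis
      proof (cases "emeasure M E = \<infinity>")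
        case True then show ?thesis using m0 by (simp add: carleson_bound_def)
      next
        case False
        define mr where "mr = enn2real (emeasure M E)"
        have m: "emeasure M E = ennreal mr" using False by (simp add: mr_def less_top ennreal_enn2real)
        have mr: "0 < mr" unfolding mr_def using m0 False
          by (simp add: enn2real_positive_iff less_top[symmetric] zero_less_iff_neq_zero)
        let ?f = "indicator E :: 'a \<Rightarrow> real"
        have Lle: "lorentz_integral M p q ?f \<le> ennreal (mr powr (q/p) / q)"
          by (rule lorentz_indicator[OF E m _ p q]) (use mr in simp)
        have inL: "in_lorentz M p q ?f"
          unfolding in_lorentz_def using E Lle by (auto simp: le_less_trans)
        have orl: "in_orlicz N \<Phi> (?f \<circ> \<tau>)" and nb: "orlicz_norm N \<Phi> (?f \<circ> \<tau>) \<le> C * lorentz_norm M p q ?f"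
          using hC inL by auto
        define cs where "cs = D * mr powr (1/p)"
        have cs0: "0 < cs" using mr by (simp add: cs_def D_def)
        have nf: "lorentz_norm M p q ?f \<le> K0 * mr powr (1/p)"
        proof -
          have "enn2real (lorentz_integral M p q ?f) \<le> mr powr (q/p) / q"
            using Lle q by (intro enn2real_leI) auto
          then have "enn2real (lorentz_integral M p q ?f) powr (1/q) \<le> (mr powr (q/p) * (1/q)) powr (1/q)"
            using q by (intro powr_mono2) auto
          also have "\<dots> = (mr powr (q/p)) powr (1/q) * K0" unfolding K0_def by (rule powr_mult)
          also have "(mr powr (q/p)) powr (1/q) = mr powr (1/p)" using q by (simp add: powr_powr)
          finally show ?thesis by (simp add: lorentz_norm_def mult.commute)
        qed
        have nless: "orlicz_norm N \<Phi> (?f \<circ> \<tau>) < cs"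
        proof -
          have n0: "0 \<le> lorentz_norm M p q ?f" by (simp add: lorentz_norm_def)
          have "C * lorentz_norm M p q ?f \<le> \<bar>C\<bar> * lorentz_norm M p q ?f"
            using n0 by (intro mult_right_mono) auto
          also have "\<dots> \<le> \<bar>C\<bar> * (K0 * mr powr (1/p))" using nf by (intro mult_left_mono) auto
          also have "\<dots> < (\<bar>C\<bar> * K0 + 1) * mr powr (1/p)" using mr by (simp add: algebra_simps)
          also have "\<dots> \<le> cs" unfolding cs_def D_def using mr by (intro mult_right_mono) auto
          finally show ?thesis using nb by simp
        qed
        have I: "(\<integral>\<^sup>+ y. ennreal (h \<bar>(?f \<circ> \<tau>) y\<bar>) \<partial>N) = ennreal (h 1) * emeasure N F"
          if "h 0 = 0" for h :: "real \<Rightarrow> real"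
          unfolding F_def by (rule indicator_int[where h=h, OF tau E that])
        have "(\<integral>\<^sup>+ y. ennreal (\<Phi> (1 * \<bar>(?f \<circ> \<tau>) y\<bar>)) \<partial>N) < \<infinity>"
          using orl zero_less_one unfolding in_orlicz_def by blast
        then have "ennreal (\<Phi> 1) * emeasure N F < \<infinity>"
          using I[of "\<lambda>x. \<Phi> (1 * x)"] ph(1) by simp
        then have Ffin: "emeasure N F < top" using ph(3)[of 1]
          by (auto simp: ennreal_mult_less_top)
        define nr where "nr = enn2real (emeasure N F)"
        have nF: "emeasure N F = ennreal nr" using Ffin by (simp add: nr_def less_top ennreal_enn2real)
        have nr0: "0 \<le> nr" by (simp add: nr_def)
        have Ic: "(\<integral>\<^sup>+ y. ennreal (\<Phi> (\<bar>(?f \<circ> \<tau>) y\<bar> / c)) \<partial>N) = ennreal (\<Phi> (1/c) * nr)" if "0 < c" for c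
        proof -
          have "(\<integral>\<^sup>+ y. ennreal (\<Phi> (\<bar>(?f \<circ> \<tau>) y\<bar> / c)) \<partial>N) = ennreal (\<Phi> (1/c)) * emeasure N F"
            using I[of "\<lambda>x. \<Phi> (x / c)"] ph(1) by simp
          also have "\<dots> = ennreal (\<Phi> (1/c) * nr)" using nF nr0 ph(2)[of "1/c"] that
            by (simp add: ennreal_mult)
          finally show ?thesis .
        qed
        define S where "S = {c::real. 0 < c \<and> (\<integral>\<^sup>+ y. ennreal (\<Phi> (\<bar>(?f \<circ> \<tau>) y\<bar> / c)) \<partial>N) \<le> 1}"
        have Sne: "S \<noteq> {}"
        proof -
          define c1 where "c1 = max 1 ((\<Phi> 1 * nr) powr (1/q))"
          have c1: "1 \<le> c1" by (simp add: c1_def)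
          have P1: "0 < \<Phi> 1" using ph(3) by simp
          have "\<Phi> (1/c1) \<le> (1/c1) powr q * \<Phi> 1"
            using ph(4)[of "1/c1" 1] c1 by simp
          then have "\<Phi> (1/c1) * nr \<le> (1/c1) powr q * (\<Phi> 1 * nr)"
            using mult_right_mono[OF _ nr0] by (metis mult.assoc)
          also have "\<dots> \<le> 1"
          proof (cases "\<Phi> 1 * nr = 0")
            case True then show ?thesis by (simp only: mult_zero_right)
          next
            case False
            then have pos: "0 < \<Phi> 1 * nr" using P1 nr0 by simp
            have "(\<Phi> 1 * nr) powr (1/q) \<le> c1" by (simp add: c1_def)
            then have "((\<Phi> 1 * nr) powr (1/q)) powr q \<le> c1 powr q"
              using q pos by (intro powr_mono2) auto
            then have le: "\<Phi> 1 * nr \<le> c1 powr q" using q pos by (simp add: powr_powr)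
            have "(1/c1) powr q = 1 / c1 powr q" using c1 by (simp add: powr_divide)
            moreover have "0 < c1 powr q" using c1 by simp
            ultimately show ?thesis using le by (simp add: divide_le_eq)
          qed
          finally have "\<Phi> (1/c1) * nr \<le> 1" .
          then have "c1 \<in> S" using c1 Ic[of c1] by (simp add: S_def)
          then show ?thesis by blast
        qed
        have "Inf S < cs" using nless by (simp add: orlicz_norm_def S_def)
        moreover have "bdd_below S" by (rule bdd_belowI[of _ 0]) (auto simp: S_def)
        ultimately obtain s where s: "s \<in> S" "s < cs"
          using cInf_less_iff[OF Sne, of cs] by blast
        have s0: "0 < s" and sI: "\<Phi> (1/s) * nr \<le> 1" using s Ic[of s] by (auto simp: S_def)
        have Pcs: "0 < \<Phi> (1/cs)" using ph(3) cs0 by simp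
        have "\<Phi> (1/cs) \<le> \<Phi> (1/s)" using s0 s cs0 by (intro ph(5)) (auto simp: frac_le)
        then have "\<Phi> (1/cs) * nr \<le> 1" using sI nr0 by (meson mult_right_mono order_trans)
        then have nrle: "nr \<le> 1 / \<Phi> (1/cs)" using Pcs by (simp add: le_divide_eq mult.commute)
        have "carleson_bound \<Phi> p D (emeasure M E) = ennreal (1 / \<Phi> (1/cs))"
          using m0 False Pcs unfolding carleson_bound_def
          by (simp add: mr_def[symmetric] cs_def inverse_ennreal divide_inverse)
        then show ?thesis using nrle nF by (simp add: F_def[symmetric] ennreal_leI)
      qed
    qed
  qed
qed

theorem theorem1p6:
  fixes M :: "'a measure" and N :: "'b measure" and \<tau> :: "'b \<Rightarrow> 'a"
    and p q :: real and \<Phi> :: "real \<Rightarrow> real"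
  assumes "sigma_finite_measure M" and "sigma_finite_measure N"
    and "\<tau> \<in> N \<rightarrow>\<^sub>M M" and "nonsingular N M \<tau>"
    and "0 < p" and "0 < q"
    and "young_function (\<lambda>t. \<Phi> (t powr (1/q)))"
  shows "(\<exists>C. \<forall>f. in_lorentz M p q f \<longrightarrow>
            in_orlicz N \<Phi> (f \<circ> \<tau>) \<and>
            orlicz_norm N \<Phi> (f \<circ> \<tau>) \<le> C * lorentz_norm M p q f)
     \<longleftrightarrow> (\<exists>D\<ge>1. \<forall>E\<in>sets M.
            emeasure N (\<tau> -` E \<inter> space N) \<le> carleson_bound \<Phi> p D (emeasure M E))"
proof
  assume "\<exists>C. \<forall>f. in_lorentz M p q f \<longrightarrow>
            in_orlicz N \<Phi> (f \<circ> \<tau>) \<and>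
            orlicz_norm N \<Phi> (f \<circ> \<tau>) \<le> C * lorentz_norm M p q f"
  then obtain C where "\<forall>f. in_lorentz M p q f \<longrightarrow>
            in_orlicz N \<Phi> (f \<circ> \<tau>) \<and>
            orlicz_norm N \<Phi> (f \<circ> \<tau>) \<le> C * lorentz_norm M p q f" by blast
  then show "\<exists>D\<ge>1. \<forall>E\<in>sets M.
            emeasure N (\<tau> -` E \<inter> space N) \<le> carleson_bound \<Phi> p D (emeasure M E)"
    by (rule forward[OF assms(3,4,5,6,7)])
next
  assume "\<exists>D\<ge>1. \<forall>E\<in>sets M.
            emeasure N (\<tau> -` E \<inter> space N) \<le> carleson_bound \<Phi> p D (emeasure M E)"
  then obtain D where D: "1 \<le> D" and carl: "\<forall>E\<in>sets M.
            emeasure N (\<tau> -` E \<inter> space N) \<le> carleson_bound \<Phi> p D (emeasure M E)" by blast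
  show "\<exists>C. \<forall>f. in_lorentz M p q f \<longrightarrow>
            in_orlicz N \<Phi> (f \<circ> \<tau>) \<and>
            orlicz_norm N \<Phi> (f \<circ> \<tau>) \<le> C * lorentz_norm M p q f"
    using backward[OF assms(1,2,3,5,6,7) D carl] by blast
qed

end
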